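(* For a given $r \in (R_c,R_0)$ the function $s \mapsto \sigma(s;r)$ increases for $s \in (s_0,s_-(r))$, decreases for $s \in (s_-(r),s_+(r))$ and increases to infinity for $s \in (s_+(r),+\infty)$.
   Context: Setting: two-dimensional steady unidirectional water waves with vorticity on finite depth, in non-dimensional units (mass flux $m=1$, gravity $g=1$). The vorticity $\omega=\omega(p)$ is a function of the stream function value $p\in[0,1]$, and $\Omega(p)=\int_0^p \omega(\tau)\,d\tau$. Let $s_0=\sqrt{\max_{p\in[0,1]}2\Omega(p)}$. For $s>s_0$ the laminar (stream) solutions in height-function form are $H(p;s)=\int_0^p \frac{d\tau}{\sqrt{s^2-2\Omega(\tau)}}$, $p\in[0,1]$, with depth $d(s)=H(1;s)$ and Bernoulli constant $R(s)=\tfrac12 s^2-\Omega(1)+d(s)$. As a function of $s$, $R(s)$ decreases from $R_0=\lim_{s\to s_0+}R(s)$ to $R_c$ as $s$ goes from $s_0$ to the critical value $s_c$ (defined by $\int_0^1 (s^2-2\Omega(p))^{-3/2}dp=1$), and increases to infinity for $s>s_c$. Hence for $r\in(R_c,R_0)$ the equation $R(s)=r$ has exactly two solutions $s_-(r)<s_c<s_+(r)$. For $r>R_c$ and $s>s_0$ define $$\sigma(s;r)=\int_0^1\Big(\frac{1}{2H_p^2(p;s)}-H(p;s)-\Omega(p)+\Omega(1)+r\Big)H_p(p;s)\,dp,$$ i.e. the flow force constant of the stream solution $H(p;s)$ with its Bernoulli constant $R(s)$ replaced by $r$. *)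

theory Defs
  imports "HOL-Analysis.Analysis"
begin

definition Omega :: "(real \<Rightarrow> real) \<Rightarrow> real \<Rightarrow> real" where
  "Omega \<omega> p = integral {0..p} \<omega>"

definition s0 :: "(real \<Rightarrow> real) \<Rightarrow> real" where
  "s0 \<omega> = sqrt (Sup ((\<lambda>p. 2 * Omega \<omega> p) ` {0..1}))"

definition Hp :: "(real \<Rightarrow> real) \<Rightarrow> real \<Rightarrow> real \<Rightarrow> real" where
  "Hp \<omega> p s = 1 / sqrt (s\<^sup>2 - 2 * Omega \<omega> p)"

definition H :: "(real \<Rightarrow> real) \<Rightarrow> real \<Rightarrow> real \<Rightarrow> real" where
  "H \<omega> p s = integral {0..p} (\<lambda>\<tau>. Hp \<omega> \<tau> s)"

definition depth :: "(real \<Rightarrow> real) \<Rightarrow> real \<Rightarrow> real" where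
  "depth \<omega> s = H \<omega> 1 s"

definition R :: "(real \<Rightarrow> real) \<Rightarrow> real \<Rightarrow> real" where
  "R \<omega> s = s\<^sup>2 / 2 - Omega \<omega> 1 + depth \<omega> s"

text \<open>R_0 = lim_{s -> s0+} R(s), taken in the extended reals (it may be +infinity).\<close>
definition R0 :: "(real \<Rightarrow> real) \<Rightarrow> ereal" where
  "R0 \<omega> = Lim (at_right (s0 \<omega>)) (\<lambda>s. ereal (R \<omega> s))"

definition sigma :: "(real \<Rightarrow> real) \<Rightarrow> real \<Rightarrow> real \<Rightarrow> real" where
  "sigma \<omega> s r = integral {0..1} (\<lambda>p.
     (1 / (2 * (Hp \<omega> p s)\<^sup>2) - H \<omega> p s - Omega \<omega> p + Omega \<omega> 1 + r) * Hp \<omega> p s)"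

end

theory Submission imports Defs begin

lemma integral_pos_cont:
  fixes f :: "real \<Rightarrow> real"
  assumes "continuous_on {0..1} f" "\<And>p. p \<in> {0..1} \<Longrightarrow> f p > 0"
  shows "integral {0..1} f > 0"
proof -
  obtain x where x: "x \<in> {0..1}" "\<And>y. y \<in> {0..1} \<Longrightarrow> f x \<le> f y"
    using continuous_attains_inf[of "{0..1::real}" f] assms(1) by auto
  have "integral {0..1} (\<lambda>_::real. f x) \<le> integral {0..1} f"
  proof -
    have i1: "(\<lambda>_::real. f x) integrable_on {0..1}" by (rule integrable_continuous_real) (rule continuous_on_const)
    have i2: "f integrable_on {0..1}" by (rule integrable_continuous_real) (rule assms(1))
    thm integral_le
    show ?thesis using integral_le[OF i1 i2] x(2) by blast
  qed
  moreover have "integral {0..1::real} (\<lambda>_. f x) = f x" by simp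
  ultimately show ?thesis using assms(2)[OF x(1)] by linarith
qed

lemma deriv_sqrt2:
  fixes c s :: real
  assumes "s\<^sup>2 - c > 0"
  shows "((\<lambda>s. sqrt (s\<^sup>2 - c)) has_real_derivative s / sqrt (s\<^sup>2 - c)) (at s)"
proof -
  have d1: "((\<lambda>s. s\<^sup>2 - c) has_real_derivative 2 * s) (at s)"
    using DERIV_diff[OF DERIV_pow[of 2 s] DERIV_const[of c "at s"]] by simp
  have d2: "(sqrt has_real_derivative inverse (sqrt (s\<^sup>2 - c)) / 2) (at (s\<^sup>2 - c))"
    by (rule DERIV_real_sqrt) (rule assms)
  have "((\<lambda>s. sqrt (s\<^sup>2 - c)) has_real_derivative inverse (sqrt (s\<^sup>2 - c)) / 2 * (2 * s)) (at s)"
    by (rule DERIV_chain2[OF d2 d1])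
  then show ?thesis by (simp add: field_simps)
qed

lemma deriv_isqrt:
  fixes c s :: real
  assumes "s\<^sup>2 - c > 0"
  shows "((\<lambda>s. 1 / sqrt (s\<^sup>2 - c)) has_real_derivative - s * (1 / ((s\<^sup>2 - c) * sqrt (s\<^sup>2 - c)))) (at s)"
proof -
  have ne: "sqrt (s\<^sup>2 - c) \<noteq> 0" using assms by simp
  have D: "((\<lambda>s. 1 / sqrt (s\<^sup>2 - c)) has_real_derivative
      (0 * sqrt (s\<^sup>2 - c) - 1 * (s / sqrt (s\<^sup>2 - c))) / (sqrt (s\<^sup>2 - c) * sqrt (s\<^sup>2 - c))) (at s)"
    by (rule DERIV_divide[OF DERIV_const deriv_sqrt2[OF assms] ne])
  have E: "(0 * sqrt (s\<^sup>2 - c) - 1 * (s / sqrt (s\<^sup>2 - c))) / (sqrt (s\<^sup>2 - c) * sqrt (s\<^sup>2 - c))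
      = - s * (1 / ((s\<^sup>2 - c) * sqrt (s\<^sup>2 - c)))"
    using assms ne by (simp add: field_simps)
  show ?thesis using D unfolding E .
qed


lemma alg_sig:
  fixes a k h :: real
  assumes "a > 0"
  shows "(1 / (2 * (1 / sqrt a)\<^sup>2) - h + k) * (1 / sqrt a) = (sqrt a / 2 + k * (1 / sqrt a)) - h * (1 / sqrt a)"
proof -
  have q: "sqrt a * sqrt a = a" using assms by simp
  have ne: "sqrt a \<noteq> 0" using assms by simp
  have h1: "(1 / sqrt a)\<^sup>2 = 1 / a" using assms by (simp add: power_divide)
  have h2: "a / sqrt a = sqrt a" using q ne by (simp add: field_simps)
  have h3: "1 / (2 * (1 / a)) * (1 / sqrt a) = (a / sqrt a) / 2" using assms by simp
  have gen: "\<And>X Y :: real. (X - h + k) * Y = X * Y + k * Y - h * Y" by (simp add: algebra_simps)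
  show ?thesis unfolding gen h1 h3 h2 by (rule refl)
qed

lemma alg_F:
  fixes a k s :: real
  assumes "a > 0"
  shows "s / sqrt a / 2 + k * (- s * (1 / (a * sqrt a))) = s * (a / 2 - k) * (1 / (a * sqrt a))"
proof -
  have q: "sqrt a * sqrt a = a" using assms by simp
  have ne: "sqrt a \<noteq> 0" using assms by simp
  have "s / sqrt a / 2 = s * (a/2) * (1 / (a * sqrt a))" using q ne assms by (simp add: field_simps)
  then show ?thesis by (simp add: algebra_simps)
qed

lemma powr_32:
  fixes a :: real
  assumes "a > 0"
  shows "a powr (-3/2) = 1 / (a * sqrt a)"
proof -
  have e: "(3/2::real) = 1 + 1/2" by simp
  have "a powr (3/2) = a powr (1 + 1/2)" by (subst e) (rule refl)
  also have "\<dots> = a powr 1 * a powr (1/2)" by (rule powr_add)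
  also have "\<dots> = a * sqrt a" using assms by (simp only: powr_half_sqrt powr_one less_imp_le)
  finally have P: "a powr (3/2) = a * sqrt a" .
  have M: "a powr (-3/2) = inverse (a powr (3/2))"
  proof -
    have "(-3/2::real) = - (3/2)" by simp
    then show ?thesis by (simp only: powr_minus)
  qed
  show ?thesis unfolding M P by (rule inverse_eq_divide)
qed

lemma mono_from_deriv:
  fixes f f' :: "real \<Rightarrow> real"
  assumes "\<And>x. x \<in> T \<Longrightarrow> DERIV f x :> f' x" "\<And>z. x < z \<Longrightarrow> z < y \<Longrightarrow> f' z > 0" "x < y" "{x..y} \<subseteq> T"
  shows "f x < f y"
proof (rule DERIV_pos_imp_increasing_open[OF assms(3)])
  fix z assume "x < z" "z < y"
  then have "z \<in> T" using assms(4) by auto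
  then show "\<exists>y. DERIV f z :> y \<and> 0 < y" using assms(1,2) \<open>x < z\<close> \<open>z < y\<close> by blast
next
  show "continuous_on {x..y} f"
    using assms(1,4) by (intro continuous_at_imp_continuous_on) (auto intro: DERIV_isCont)
qed

lemma antimono_from_deriv:
  fixes f f' :: "real \<Rightarrow> real"
  assumes "\<And>x. x \<in> T \<Longrightarrow> DERIV f x :> f' x" "\<And>z. x < z \<Longrightarrow> z < y \<Longrightarrow> f' z < 0" "x < y" "{x..y} \<subseteq> T"
  shows "f x > f y"
proof (rule DERIV_neg_imp_decreasing_open[OF assms(3)])
  fix z assume "x < z" "z < y"
  then have "z \<in> T" using assms(4) by auto
  then show "\<exists>y. DERIV f z :> y \<and> y < 0" using assms(1,2) \<open>x < z\<close> \<open>z < y\<close> by blast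
next
  show "continuous_on {x..y} f"
    using assms(1,4) by (intro continuous_at_imp_continuous_on) (auto intro: DERIV_isCont)
qed

locale stream =
  fixes \<omega> :: "real \<Rightarrow> real" and S :: real
  assumes Ocont: "continuous_on {0..1} (Omega \<omega>)"
    and S_nn: "0 \<le> S"
    and Obd: "\<And>p. p \<in> {0..1} \<Longrightarrow> 2 * Omega \<omega> p \<le> S\<^sup>2"
begin

definition I :: "real \<Rightarrow> real" where
  "I s = integral {0..1} (\<lambda>p. 1 / ((s\<^sup>2 - 2 * Omega \<omega> p) * sqrt (s\<^sup>2 - 2 * Omega \<omega> p)))"

lemma A_pos: "S < s \<Longrightarrow> p \<in> {0..1} \<Longrightarrow> 0 < s\<^sup>2 - 2 * Omega \<omega> p"
proof -
  assume "S < s" "p \<in> {0..1}"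
  then have "S\<^sup>2 < s\<^sup>2" using S_nn by (intro power_strict_mono) auto
  then show ?thesis using Obd[OF \<open>p \<in> {0..1}\<close>] by linarith
qed

lemma sqrt_ne: "S < s \<Longrightarrow> p \<in> {0..1} \<Longrightarrow> sqrt (s\<^sup>2 - 2 * Omega \<omega> p) \<noteq> 0"
  using A_pos by fastforce

lemma cont_Hp: "S < s \<Longrightarrow> continuous_on {0..1} (\<lambda>p. Hp \<omega> p s)"
  unfolding Hp_def using A_pos
  by (intro continuous_intros Ocont) force

lemma cont_Iint: "S < s \<Longrightarrow> continuous_on {0..1} (\<lambda>p. 1 / ((s\<^sup>2 - 2 * Omega \<omega> p) * sqrt (s\<^sup>2 - 2 * Omega \<omega> p)))"
  using A_pos by (intro continuous_intros Ocont) force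

lemma cont_Fint: "S < s \<Longrightarrow> continuous_on {0..1} (\<lambda>p. sqrt (s\<^sup>2 - 2 * Omega \<omega> p) / 2 + (Omega \<omega> 1 - Omega \<omega> p + r) * (1 / sqrt (s\<^sup>2 - 2 * Omega \<omega> p)))"
  using sqrt_ne by (intro continuous_intros Ocont) auto

lemma I_pos: "S < s \<Longrightarrow> 0 < I s"
  unfolding I_def using A_pos by (intro integral_pos_cont cont_Iint) auto

lemma I_decr:
  assumes "S < s1" "s1 < s2"
  shows "I s2 < I s1"
proof -
  have "0 < integral {0..1} (\<lambda>p. 1 / ((s1\<^sup>2 - 2 * Omega \<omega> p) * sqrt (s1\<^sup>2 - 2 * Omega \<omega> p))
       - 1 / ((s2\<^sup>2 - 2 * Omega \<omega> p) * sqrt (s2\<^sup>2 - 2 * Omega \<omega> p)))"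
  proof (rule integral_pos_cont)
    show "continuous_on {0..1} (\<lambda>p. 1 / ((s1\<^sup>2 - 2 * Omega \<omega> p) * sqrt (s1\<^sup>2 - 2 * Omega \<omega> p))
       - 1 / ((s2\<^sup>2 - 2 * Omega \<omega> p) * sqrt (s2\<^sup>2 - 2 * Omega \<omega> p)))"
      using assms by (intro continuous_intros cont_Iint) auto
  next
    fix p :: real assume p: "p \<in> {0..1}"
    have a1: "0 < s1\<^sup>2 - 2 * Omega \<omega> p" using A_pos[OF assms(1) p] .
    have "s1\<^sup>2 < s2\<^sup>2" using assms S_nn by (intro power_strict_mono) auto
    then have lt: "s1\<^sup>2 - 2 * Omega \<omega> p < s2\<^sup>2 - 2 * Omega \<omega> p" by simp
    then have "sqrt (s1\<^sup>2 - 2 * Omega \<omega> p) < sqrt (s2\<^sup>2 - 2 * Omega \<omega> p)" by simp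
    then have "(s1\<^sup>2 - 2 * Omega \<omega> p) * sqrt (s1\<^sup>2 - 2 * Omega \<omega> p) < (s2\<^sup>2 - 2 * Omega \<omega> p) * sqrt (s2\<^sup>2 - 2 * Omega \<omega> p)"
      using lt a1 by (intro mult_strict_mono) auto
    then show "0 < 1 / ((s1\<^sup>2 - 2 * Omega \<omega> p) * sqrt (s1\<^sup>2 - 2 * Omega \<omega> p))
       - 1 / ((s2\<^sup>2 - 2 * Omega \<omega> p) * sqrt (s2\<^sup>2 - 2 * Omega \<omega> p))"
      using a1 by (simp add: frac_less2)
  qed
  also have "\<dots> = I s1 - I s2"
    unfolding I_def using assms
    by (intro integral_diff integrable_continuous_real cont_Iint) auto
  finally show ?thesis by simp
qed

lemma HHp:
  assumes "S < s"
  shows "integral {0..1} (\<lambda>p. H \<omega> p s * Hp \<omega> p s) = (depth \<omega> s)\<^sup>2 / 2"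
proof -
  have "((\<lambda>p. H \<omega> p s * Hp \<omega> p s) has_integral ((\<lambda>q. (H \<omega> q s)\<^sup>2 / 2) 1 - (\<lambda>q. (H \<omega> q s)\<^sup>2 / 2) 0)) {0..1}"
  proof (rule fundamental_theorem_of_calculus)
    fix x :: real assume x: "x \<in> {0..1}"
    have "((\<lambda>q. H \<omega> q s) has_vector_derivative Hp \<omega> x s) (at x within {0..1})"
      unfolding H_def by (rule integral_has_vector_derivative[OF cont_Hp[OF assms] x])
    then have d: "((\<lambda>q. H \<omega> q s) has_real_derivative Hp \<omega> x s) (at x within {0..1})"
      by (simp add: has_real_derivative_iff_has_vector_derivative)
    have "((\<lambda>q. (H \<omega> q s)^2 / 2) has_real_derivative (of_nat 2 * (Hp \<omega> x s * H \<omega> x s ^ (2 - Suc 0))) / 2) (at x within {0..1})"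
      by (rule DERIV_cdivide[OF DERIV_power[OF d]])
    then show "((\<lambda>q. (H \<omega> q s)\<^sup>2 / 2) has_vector_derivative H \<omega> x s * Hp \<omega> x s) (at x within {0..1})"
      by (simp add: has_real_derivative_iff_has_vector_derivative mult.commute)
  qed simp
  moreover have "H \<omega> 0 s = 0" unfolding H_def by simp
  ultimately show ?thesis unfolding depth_def by (simp add: integral_unique)
qed

lemma sigma_eq:
  assumes "S < s"
  shows "sigma \<omega> s r = integral {0..1} (\<lambda>p. sqrt (s\<^sup>2 - 2 * Omega \<omega> p) / 2 + (Omega \<omega> 1 - Omega \<omega> p + r) * (1 / sqrt (s\<^sup>2 - 2 * Omega \<omega> p))) - (depth \<omega> s)\<^sup>2 / 2"
proof -
  have "sigma \<omega> s r = integral {0..1} (\<lambda>p. (sqrt (s\<^sup>2 - 2 * Omega \<omega> p) / 2 + (Omega \<omega> 1 - Omega \<omega> p + r) * (1 / sqrt (s\<^sup>2 - 2 * Omega \<omega> p))) - H \<omega> p s * Hp \<omega> p s)"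
    unfolding sigma_def
  proof (rule integral_cong)
    fix p :: real assume "p \<in> {0..1}"
    from alg_sig[OF A_pos[OF assms this], of "H \<omega> p s" "Omega \<omega> 1 - Omega \<omega> p + r"]
    show "(1 / (2 * (Hp \<omega> p s)\<^sup>2) - H \<omega> p s - Omega \<omega> p + Omega \<omega> 1 + r) * Hp \<omega> p s =
      sqrt (s\<^sup>2 - 2 * Omega \<omega> p) / 2 + (Omega \<omega> 1 - Omega \<omega> p + r) * (1 / sqrt (s\<^sup>2 - 2 * Omega \<omega> p)) - H \<omega> p s * Hp \<omega> p s"
      unfolding Hp_def by (simp add: algebra_simps)
  qed
  also have "\<dots> = integral {0..1} (\<lambda>p. sqrt (s\<^sup>2 - 2 * Omega \<omega> p) / 2 + (Omega \<omega> 1 - Omega \<omega> p + r) * (1 / sqrt (s\<^sup>2 - 2 * Omega \<omega> p)))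
      - integral {0..1} (\<lambda>p. H \<omega> p s * Hp \<omega> p s)"
  proof (rule integral_diff)
    show "(\<lambda>p. sqrt (s\<^sup>2 - 2 * Omega \<omega> p) / 2 + (Omega \<omega> 1 - Omega \<omega> p + r) * (1 / sqrt (s\<^sup>2 - 2 * Omega \<omega> p))) integrable_on {0..1}"
      by (intro integrable_continuous_real cont_Fint assms)
    have "continuous_on {0..1} (\<lambda>p. H \<omega> p s)"
      unfolding H_def by (rule indefinite_integral_continuous_1[OF integrable_continuous_real[OF cont_Hp[OF assms]]])
    then show "(\<lambda>p. H \<omega> p s * Hp \<omega> p s) integrable_on {0..1}"
      by (intro integrable_continuous_real continuous_intros cont_Hp assms)
  qed
  finally show ?thesis using HHp[OF assms] by simp
qed

lemma A_pos2: "z \<in> {S<..} \<times> {0..1} \<Longrightarrow> 0 < (fst z)\<^sup>2 - 2 * Omega \<omega> (snd z)"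
  using A_pos by (auto simp: mem_Times_iff)

lemma Osnd: "continuous_on ({S<..} \<times> {0..1}) (\<lambda>z. Omega \<omega> (snd z))"
  by (rule continuous_on_compose2[OF Ocont continuous_on_snd[OF continuous_on_id]]) auto

lemma atS: "S < s \<Longrightarrow> at s within {S<..} = at s"
  by (rule at_within_open) auto

lemma depth_deriv:
  assumes "S < s"
  shows "(depth \<omega> has_real_derivative - s * I s) (at s)"
proof -
  let ?f = "\<lambda>x p. 1 / sqrt (x\<^sup>2 - 2 * Omega \<omega> p)"
  let ?fx = "\<lambda>x p. - x * (1 / ((x\<^sup>2 - 2 * Omega \<omega> p) * sqrt (x\<^sup>2 - 2 * Omega \<omega> p)))"
  have D: "((\<lambda>x. integral (cbox 0 1) (?f x)) has_field_derivative integral (cbox 0 1) (?fx s)) (at s within {S<..})"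
  proof (rule leibniz_rule_field_derivative)
    fix x t assume x: "x \<in> {S<..}" and t: "t \<in> cbox 0 (1::real)"
    have "0 < x\<^sup>2 - 2 * Omega \<omega> t" using A_pos x t by auto
    from deriv_isqrt[OF this]
    show "((\<lambda>x. ?f x t) has_field_derivative ?fx x t) (at x within {S<..})"
      by (rule has_field_derivative_at_within)
  next
    fix x assume "x \<in> {S<..}"
    then show "?f x integrable_on cbox 0 1"
      using cont_Hp[of x] unfolding Hp_def cbox_interval by (intro integrable_continuous_real) auto
  next
    show "continuous_on ({S<..} \<times> cbox 0 1) (\<lambda>(x, t). ?fx x t)"
      unfolding case_prod_unfold cbox_interval
      using A_pos2 by (intro continuous_intros Osnd) force+
  qed (use assms in auto)
  have e1: "(\<lambda>x. integral (cbox 0 1) (?f x)) = depth \<omega>"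
    by (rule ext) (simp add: depth_def H_def Hp_def cbox_interval)
  have e2: "integral (cbox 0 1) (?fx s) = - s * I s"
    unfolding I_def cbox_interval by (rule integral_mult_right)
  show ?thesis using D unfolding e1 e2 atS[OF assms] .
qed

definition F :: "real \<Rightarrow> real \<Rightarrow> real" where
  "F r s = integral {0..1} (\<lambda>p. sqrt (s\<^sup>2 - 2 * Omega \<omega> p) / 2 + (Omega \<omega> 1 - Omega \<omega> p + r) * (1 / sqrt (s\<^sup>2 - 2 * Omega \<omega> p)))"

lemma F_deriv:
  assumes "S < s"
  shows "(F r has_real_derivative s * (s\<^sup>2 / 2 - Omega \<omega> 1 - r) * I s) (at s)"
proof -
  let ?f = "\<lambda>x p. sqrt (x\<^sup>2 - 2 * Omega \<omega> p) / 2 + (Omega \<omega> 1 - Omega \<omega> p + r) * (1 / sqrt (x\<^sup>2 - 2 * Omega \<omega> p))"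
  let ?fx = "\<lambda>x p. x / sqrt (x\<^sup>2 - 2 * Omega \<omega> p) / 2 + (Omega \<omega> 1 - Omega \<omega> p + r) * (- x * (1 / ((x\<^sup>2 - 2 * Omega \<omega> p) * sqrt (x\<^sup>2 - 2 * Omega \<omega> p))))"
  have D: "((\<lambda>x. integral (cbox 0 1) (?f x)) has_field_derivative integral (cbox 0 1) (?fx s)) (at s within {S<..})"
  proof (rule leibniz_rule_field_derivative)
    fix x t assume x: "x \<in> {S<..}" and t: "t \<in> cbox 0 (1::real)"
    have "0 < x\<^sup>2 - 2 * Omega \<omega> t" using A_pos x t by auto
    from DERIV_add[OF DERIV_cdivide[OF deriv_sqrt2[OF this]] DERIV_cmult[OF deriv_isqrt[OF this]]]
    show "((\<lambda>x. ?f x t) has_field_derivative ?fx x t) (at x within {S<..})"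
      by (rule has_field_derivative_at_within)
  next
    fix x assume "x \<in> {S<..}"
    then show "?f x integrable_on cbox 0 1"
      using cont_Fint[of x] unfolding cbox_interval by (intro integrable_continuous_real) auto
  next
    show "continuous_on ({S<..} \<times> cbox 0 1) (\<lambda>(x, t). ?fx x t)"
      unfolding case_prod_unfold cbox_interval
      using A_pos2 by (intro continuous_intros Osnd) force+
  qed (use assms in auto)
  have e1: "(\<lambda>x. integral (cbox 0 1) (?f x)) = F r"
    by (rule ext) (simp add: F_def cbox_interval)
  have e2: "integral (cbox 0 1) (?fx s) = s * (s\<^sup>2 / 2 - Omega \<omega> 1 - r) * I s"
    unfolding I_def cbox_interval
  proof -
    have "integral {0..1} (?fx s) = integral {0..1} (\<lambda>p. s * (s\<^sup>2 / 2 - Omega \<omega> 1 - r) * (1 / ((s\<^sup>2 - 2 * Omega \<omega> p) * sqrt (s\<^sup>2 - 2 * Omega \<omega> p))))"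
    proof (rule integral_cong)
      fix p :: real assume "p \<in> {0..1}"
      have eqk: "(s\<^sup>2 - 2 * Omega \<omega> p) / 2 - (Omega \<omega> 1 - Omega \<omega> p + r) = s\<^sup>2 / 2 - Omega \<omega> 1 - r"
        by (simp add: field_simps)
      from alg_F[OF A_pos[OF assms \<open>p \<in> {0..1}\<close>], where s=s and k="Omega \<omega> 1 - Omega \<omega> p + r"]
      show "?fx s p = s * (s\<^sup>2 / 2 - Omega \<omega> 1 - r) * (1 / ((s\<^sup>2 - 2 * Omega \<omega> p) * sqrt (s\<^sup>2 - 2 * Omega \<omega> p)))"
        unfolding eqk .
    qed
    also have "\<dots> = s * (s\<^sup>2 / 2 - Omega \<omega> 1 - r) * integral {0..1} (\<lambda>p. 1 / ((s\<^sup>2 - 2 * Omega \<omega> p) * sqrt (s\<^sup>2 - 2 * Omega \<omega> p)))"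
      by (rule integral_mult_right)
    finally show "integral {0..1} (?fx s) = s * (s\<^sup>2 / 2 - Omega \<omega> 1 - r) * integral {0..1} (\<lambda>p. 1 / ((s\<^sup>2 - 2 * Omega \<omega> p) * sqrt (s\<^sup>2 - 2 * Omega \<omega> p)))" .
  qed
  show ?thesis using D unfolding e1 e2 atS[OF assms] .
qed

lemma sigma_deriv:
  assumes "S < s"
  shows "((\<lambda>x. sigma \<omega> x r) has_real_derivative s * I s * (R \<omega> s - r)) (at s)"
proof -
  have D: "((\<lambda>x. F r x - (depth \<omega> x)^2 / 2) has_real_derivative
      s * (s\<^sup>2 / 2 - Omega \<omega> 1 - r) * I s - of_nat 2 * (- s * I s * depth \<omega> s ^ (2 - Suc 0)) / 2) (at s)"
    by (rule DERIV_diff[OF F_deriv[OF assms] DERIV_cdivide[OF DERIV_power[OF depth_deriv[OF assms]]]])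
  have E: "s * (s\<^sup>2 / 2 - Omega \<omega> 1 - r) * I s - of_nat 2 * (- s * I s * depth \<omega> s ^ (2 - Suc 0)) / 2
      = s * I s * (R \<omega> s - r)"
    by (simp add: R_def algebra_simps)
  have D2: "((\<lambda>x. F r x - (depth \<omega> x)^2 / 2) has_real_derivative s * I s * (R \<omega> s - r)) (at s)"
    using D unfolding E .
  show ?thesis
  proof (rule has_field_derivative_transform_within_open[OF D2, of "{S<..}"])
    fix z assume "z \<in> {S<..}"
    then show "F r z - (depth \<omega> z)\<^sup>2 / 2 = sigma \<omega> z r"
      using sigma_eq[of z r] by (simp add: F_def)
  qed (use assms in auto)
qed

lemma R_deriv:
  assumes "S < s"
  shows "(R \<omega> has_real_derivative s * (1 - I s)) (at s)"
proof -
  have D: "((\<lambda>x. x ^ 2 / 2 - Omega \<omega> 1 + depth \<omega> x) has_real_derivative real 2 * (s ^ (2 - Suc 0)) / 2 - 0 + - s * I s) (at s)"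
    by (rule DERIV_add[OF DERIV_diff[OF DERIV_cdivide[OF DERIV_pow] DERIV_const] depth_deriv[OF assms]])
  have e1: "(\<lambda>x. x ^ 2 / 2 - Omega \<omega> 1 + depth \<omega> x) = R \<omega>"
    by (rule ext) (simp add: R_def)
  have e2: "real 2 * (s ^ (2 - Suc 0)) / 2 - 0 + - s * I s = s * (1 - I s)"
    by (simp add: algebra_simps)
  show ?thesis using D unfolding e1 e2 .
qed

lemma sigma_lower:
  assumes s: "S + 1 \<le> s" and K: "\<And>p. p \<in> {0..1} \<Longrightarrow> \<bar>Omega \<omega> p\<bar> \<le> K"
  shows "(s - S) / 2 - (2 * K + \<bar>r\<bar>) - 1 / 2 \<le> sigma \<omega> s r"
proof -
  have sS: "S < s" using s by simp
  have g2: "\<And>X Y B::real. \<bar>X\<bar> \<le> Y * 1 \<Longrightarrow> Y \<le> B \<Longrightarrow> - B \<le> X" by (auto simp: abs_le_iff)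
  have g3: "\<And>a b c d::real. - c \<le> d \<Longrightarrow> a \<le> b \<Longrightarrow> a / 2 - c \<le> b / 2 + d" by linarith
  have sq: "s - S \<le> sqrt (s\<^sup>2 - 2 * Omega \<omega> p)" if p: "p \<in> {0..1}" for p
  proof -
    have "S * S \<le> S * s" using S_nn s by (intro mult_left_mono) auto
    then have "(s - S)\<^sup>2 \<le> s\<^sup>2 - S\<^sup>2"
      using S_nn s by (simp add: power2_eq_square algebra_simps mult_right_mono)
    also have "\<dots> \<le> s\<^sup>2 - 2 * Omega \<omega> p" using Obd[OF p] by simp
    finally have "sqrt ((s - S)\<^sup>2) \<le> sqrt (s\<^sup>2 - 2 * Omega \<omega> p)" by (rule real_sqrt_le_mono)
    then show ?thesis using s by simp
  qed
  have inv_le: "1 / sqrt (s\<^sup>2 - 2 * Omega \<omega> p) \<le> 1" if p: "p \<in> {0..1}" for p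
  proof -
    have "1 \<le> sqrt (s\<^sup>2 - 2 * Omega \<omega> p)" using sq[OF p] s by linarith
    moreover have g: "\<And>t::real. 1 \<le> t \<Longrightarrow> 1 / t \<le> 1" by simp
    ultimately show ?thesis by blast
  qed
  have inv_nn: "0 \<le> 1 / sqrt (s\<^sup>2 - 2 * Omega \<omega> p)" if p: "p \<in> {0..1}" for p
    using A_pos[OF sS p] by simp
  have cont1: "continuous_on {0..1} (\<lambda>p. 1 / sqrt (s\<^sup>2 - 2 * Omega \<omega> p))"
    using cont_Hp[OF sS] unfolding Hp_def .
  have "F r s \<ge> integral {0..1::real} (\<lambda>p. (s - S) / 2 - (2 * K + \<bar>r\<bar>))"
    unfolding F_def
  proof (rule integral_le)
    show "(\<lambda>p::real. (s - S) / 2 - (2 * K + \<bar>r\<bar>)) integrable_on {0..1}"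
      by (rule integrable_continuous_real[OF continuous_on_const])
    show "(\<lambda>p. sqrt (s\<^sup>2 - 2 * Omega \<omega> p) / 2 + (Omega \<omega> 1 - Omega \<omega> p + r) * (1 / sqrt (s\<^sup>2 - 2 * Omega \<omega> p))) integrable_on {0..1}"
      by (intro integrable_continuous_real cont_Fint sS)
    fix p :: real assume p: "p \<in> {0..1}"
    have k: "\<bar>Omega \<omega> 1 - Omega \<omega> p + r\<bar> \<le> 2 * K + \<bar>r\<bar>"
      using K[OF p] K[of 1] by auto
    have "\<bar>(Omega \<omega> 1 - Omega \<omega> p + r) * (1 / sqrt (s\<^sup>2 - 2 * Omega \<omega> p))\<bar>
        \<le> \<bar>Omega \<omega> 1 - Omega \<omega> p + r\<bar> * 1"
      unfolding abs_mult using inv_le[OF p] inv_nn[OF p]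
      by (intro mult_left_mono) auto
    then have "- (2 * K + \<bar>r\<bar>) \<le> (Omega \<omega> 1 - Omega \<omega> p + r) * (1 / sqrt (s\<^sup>2 - 2 * Omega \<omega> p))"
      by (rule g2[OF _ k])
    then show "(s - S) / 2 - (2 * K + \<bar>r\<bar>) \<le> sqrt (s\<^sup>2 - 2 * Omega \<omega> p) / 2 + (Omega \<omega> 1 - Omega \<omega> p + r) * (1 / sqrt (s\<^sup>2 - 2 * Omega \<omega> p))"
      by (rule g3[OF _ sq[OF p]])
  qed
  then have F1: "F r s \<ge> (s - S) / 2 - (2 * K + \<bar>r\<bar>)" by simp
  have dle: "depth \<omega> s \<le> integral {0..1::real} (\<lambda>p. 1)"
    unfolding depth_def H_def Hp_def
    by (rule integral_le) (use cont1 inv_le in \<open>auto intro: integrable_continuous_real\<close>)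
  have dge: "0 \<le> depth \<omega> s"
    unfolding depth_def H_def Hp_def
    by (rule integral_nonneg) (use cont1 inv_nn in \<open>auto intro: integrable_continuous_real\<close>)
  have "(depth \<omega> s)\<^sup>2 \<le> 1" using dle dge by (simp add: power_le_one)
  then show ?thesis using F1 sigma_eq[OF sS, of r] unfolding F_def by linarith
qed

end

theorem lemma3p6:
  fixes \<omega> :: "real \<Rightarrow> real" and r sc sm sp :: real
  assumes omega_int: "\<omega> integrable_on {0..1}"
    and omega_bdd: "bounded (\<omega> ` {0..1})"
    and sc_gt: "s0 \<omega> < sc"
    and sc_crit: "integral {0..1} (\<lambda>p. (sc\<^sup>2 - 2 * Omega \<omega> p) powr (-3/2)) = 1"
    and r_gt: "R \<omega> sc < r"
    and r_lt: "ereal r < R0 \<omega>"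
    and sm: "s0 \<omega> < sm" "sm < sc" "R \<omega> sm = r"
    and sp: "sc < sp" "R \<omega> sp = r"
  shows "strict_mono_on {s0 \<omega><..<sm} (\<lambda>s. sigma \<omega> s r)
       \<and> strict_antimono_on {sm<..<sp} (\<lambda>s. sigma \<omega> s r)
       \<and> strict_mono_on {sp<..} (\<lambda>s. sigma \<omega> s r)
       \<and> filterlim (\<lambda>s. sigma \<omega> s r) at_top at_top"
proof -
  have eO: "Omega \<omega> = (\<lambda>x. integral {0..x} \<omega>)" by (rule ext) (simp add: Omega_def)
  have Ocont: "continuous_on {0..1} (Omega \<omega>)"
    unfolding eO by (rule indefinite_integral_continuous_1[OF omega_int])
  let ?X = "(\<lambda>p. 2 * Omega \<omega> p) ` {0..1::real}"
  have "compact ?X"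
    by (rule compact_continuous_image) (auto intro!: continuous_intros Ocont)
  then have bdd: "bdd_above ?X" by (intro bounded_imp_bdd_above compact_imp_bounded)
  have O0: "Omega \<omega> 0 = 0" by (simp add: Omega_def)
  have "2 * Omega \<omega> 0 \<le> Sup ?X" by (rule cSup_upper[OF _ bdd]) auto
  then have Sup_nn: "0 \<le> Sup ?X" using O0 by simp
  have S_nn: "0 \<le> s0 \<omega>" using Sup_nn by (simp add: s0_def)
  have S2: "(s0 \<omega>)\<^sup>2 = Sup ?X" unfolding s0_def using Sup_nn by simp
  have Obd: "2 * Omega \<omega> p \<le> (s0 \<omega>)\<^sup>2" if "p \<in> {0..1}" for p
    unfolding S2 by (rule cSup_upper[OF _ bdd]) (use that in auto)
  interpret st: stream \<omega> "s0 \<omega>"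
    by unfold_locales (use Ocont S_nn Obd in auto)
  define S where "S = s0 \<omega>"
  have "st.I sc = integral {0..1} (\<lambda>p. (sc\<^sup>2 - 2 * Omega \<omega> p) powr (-3/2))"
    unfolding st.I_def
    apply (rule integral_cong)
    using powr_32 st.A_pos[OF sc_gt] by metis
  then have Isc: "st.I sc = 1" using sc_crit by simp
  have Rd: "DERIV (R \<omega>) z :> z * (1 - st.I z)" if "z \<in> {S<..}" for z
    using st.R_deriv that unfolding S_def by auto
  have Rdec: "R \<omega> y < R \<omega> x" if xy: "S < x" "x < y" "y \<le> sc" for x y
  proof -
    have n: "z * (1 - st.I z) < 0" if z: "x < z" "z < y" for z
    proof -
      have "st.I sc < st.I z" using z xy by (intro st.I_decr) (auto simp: S_def)
      moreover have "0 < z" using z xy S_nn unfolding S_def by linarith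
      ultimately show ?thesis using Isc by (simp add: mult_pos_neg)
    qed
    have "{x..y} \<subseteq> {S<..}" using xy by auto
    from antimono_from_deriv[of "{S<..}" "R \<omega>" "\<lambda>t. t * (1 - st.I t)", OF Rd n xy(2) this]
    show ?thesis by simp
  qed
  have Rinc: "R \<omega> x < R \<omega> y" if xy: "sc \<le> x" "x < y" for x y
  proof -
    have n: "0 < z * (1 - st.I z)" if z: "x < z" "z < y" for z
    proof -
      have "st.I z < st.I sc" using z xy sc_gt by (intro st.I_decr) auto
      moreover have "0 < z" using z xy S_nn sc_gt by linarith
      ultimately show ?thesis using Isc by simp
    qed
    have "{x..y} \<subseteq> {S<..}" using xy sc_gt unfolding S_def by auto
    from mono_from_deriv[of "{S<..}" "R \<omega>" "\<lambda>t. t * (1 - st.I t)", OF Rd n xy(2) this]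
    show ?thesis by simp
  qed
  have sd: "DERIV (\<lambda>x. sigma \<omega> x r) z :> z * st.I z * (R \<omega> z - r)" if "z \<in> {S<..}" for z
    using st.sigma_deriv that unfolding S_def by auto
  have dpos: "0 < z * st.I z" if "S < z" for z
    using that S_nn st.I_pos[of z] unfolding S_def by simp
  have m1: "strict_mono_on {s0 \<omega><..<sm} (\<lambda>s. sigma \<omega> s r)"
  proof (rule monotone_onI)
    fix x y assume xy: "x \<in> {s0 \<omega><..<sm}" "y \<in> {s0 \<omega><..<sm}" "x < y"
    show "sigma \<omega> x r < sigma \<omega> y r"
    proof (rule mono_from_deriv[where T="{S<..}", OF sd])
      fix z assume z: "x < z" "z < y"
      then have "r < R \<omega> z" using Rdec[of z sm] xy sm unfolding S_def by auto
      then show "0 < z * st.I z * (R \<omega> z - r)" using dpos[of z] z xy unfolding S_def by simp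
    qed (use xy in \<open>auto simp: S_def\<close>)
  qed
  have m2: "strict_antimono_on {sm<..<sp} (\<lambda>s. sigma \<omega> s r)"
  proof (rule monotone_onI)
    fix x y assume xy: "x \<in> {sm<..<sp}" "y \<in> {sm<..<sp}" "x < y"
    show "sigma \<omega> y r < sigma \<omega> x r"
    proof (rule antimono_from_deriv[where T="{S<..}", OF sd])
      fix z assume z: "x < z" "z < y"
      have "R \<omega> z < r"
      proof (cases "z < sc")
        case True then show ?thesis using Rdec[of sm z] xy z sm unfolding S_def by auto
      next
        case False
        show ?thesis
        proof (cases "z = sc")
          case True then show ?thesis using r_gt by simp
        next
          case False
          then show ?thesis using Rinc[of z sp] \<open>\<not> z < sc\<close> xy z sp by auto
        qed
      qed
      moreover have "S < z" using z xy sm unfolding S_def by auto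
      ultimately show "z * st.I z * (R \<omega> z - r) < 0" using dpos[of z] by (simp add: mult_pos_neg)
    qed (use xy sm in \<open>auto simp: S_def\<close>)
  qed
  have m3: "strict_mono_on {sp<..} (\<lambda>s. sigma \<omega> s r)"
  proof (rule monotone_onI)
    fix x y assume xy: "x \<in> {sp<..}" "y \<in> {sp<..}" "x < y"
    show "sigma \<omega> x r < sigma \<omega> y r"
    proof (rule mono_from_deriv[where T="{S<..}", OF sd])
      fix z assume z: "x < z" "z < y"
      then have "r < R \<omega> z" using Rinc[of sp z] xy sp by auto
      moreover have "S < z" using z xy sm sp unfolding S_def by auto
      ultimately show "0 < z * st.I z * (R \<omega> z - r)" using dpos[of z] by simp
    qed (use xy sm sp in \<open>auto simp: S_def\<close>)
  qed
  obtain K where K: "\<And>p. p \<in> {0..1} \<Longrightarrow> \<bar>Omega \<omega> p\<bar> \<le> K"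
  proof -
    have "compact (Omega \<omega> ` {0..1})" by (rule compact_continuous_image[OF Ocont]) auto
    then obtain B where "\<forall>x\<in>Omega \<omega> ` {0..1}. norm x \<le> B"
      using compact_imp_bounded bounded_iff by metis
    then have "\<And>p. p \<in> {0..1} \<Longrightarrow> \<bar>Omega \<omega> p\<bar> \<le> B" by auto
    then show ?thesis by (rule that)
  qed
  have lim: "filterlim (\<lambda>s. sigma \<omega> s r) at_top at_top"
    unfolding filterlim_at_top
  proof
    fix Z :: real
    let ?N = "max (S + 1) (2 * (Z + (2 * K + \<bar>r\<bar>) + 1 / 2) + S)"
    show "eventually (\<lambda>s. Z \<le> sigma \<omega> s r) at_top"
      unfolding eventually_at_top_linorder
    proof (intro exI allI impI)
      fix s assume s: "?N \<le> s"
      have "(s - S) / 2 - (2 * K + \<bar>r\<bar>) - 1 / 2 \<le> sigma \<omega> s r"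
        using st.sigma_lower[of s K r] s K unfolding S_def by auto
      moreover have "Z \<le> (s - S) / 2 - (2 * K + \<bar>r\<bar>) - 1 / 2"
      proof -
        have "2 * (Z + (2 * K + \<bar>r\<bar>) + 1 / 2) + S \<le> s" using s by (rule max.boundedE)
        moreover have g: "\<And>a b c d::real. 2 * (a + b + 1 / 2) + c \<le> d \<Longrightarrow> a \<le> (d - c) / 2 - b - 1 / 2"
          by (simp add: field_simps)
        ultimately show ?thesis by blast
      qed
      ultimately show "Z \<le> sigma \<omega> s r" by linarith
    qed
  qed
  show ?thesis using m1 m2 m3 lim by blast
qed

end
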